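(* Let $m\ge 2$, let $\mathcal{A}\in\mathbb{C}^{n_1\times\cdots\times n_m}$ be a nonzero complex tensor, and let $\mathcal{B}\in\mathbb{R}^{2n_1\times\cdots\times 2n_m}$ be the real tensor such that for all $x^{(i)},y^{(i)}\in\mathbb{R}^{n_i}$, writing $u^{(i)}=(x^{(i)},y^{(i)})\in\mathbb{R}^{2n_i}$, $$\langle\mathcal{B},\otimes_{i=1}^m u^{(i)}\rangle=\mathrm{Re}\,\big\langle\mathcal{A},\otimes_{i=1}^m (x^{(i)}+\sqrt{-1}\,y^{(i)})\big\rangle .$$ Suppose $(\hat u^{(1)},\dots,\hat u^{(m-1)})$, $\hat u^{(i)}\in\mathbb{R}^{2n_i}$, is a maximizer of $$\max\ \big\|\langle\mathcal{B},u^{(1)}\otimes\cdots\otimes u^{(m-1)}\rangle\big\|\quad\text{s.t. } u^{(i)}\in\mathbb{R}^{2n_i},\ \|u^{(i)}\|=1,\ i=1,\dots,m-1,$$ and let $\lambda$ be its maximal value. Define $\hat u^{(m)}=\langle\mathcal{B},\hat u^{(1)}\otimes\cdots\otimes\hat u^{(m-1)}\rangle/\lambda\in\mathbb{R}^{2n_m}$, write $\hat u^{(i)}=(\hat x^{(i)},\hat y^{(i)})$ with $\hat x^{(i)},\hat y^{(i)}\in\mathbb{R}^{n_i}$, and set $\hat z^{(i)}=\hat x^{(i)}+\sqrt{-1}\,\hat y^{(i)}$ for $i=1,\dots,m$. Then $\lambda$ is the largest U-eigenvalue of $\mathcal{A}$ and $(\hat z^{(1)},\dots,\hat z^{(m)})$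 is a tuple of U-eigenvectors associated with $\lambda$.
   Context: For complex tensors, $\langle\mathcal{A},\mathcal{C}\rangle=\sum_{i_1,\dots,i_m}\overline{\mathcal{A}_{i_1\cdots i_m}}\,\mathcal{C}_{i_1\cdots i_m}$, and $\otimes_{i=1}^m z^{(i)}$ is the rank-one tensor with entries $z^{(1)}_{i_1}\cdots z^{(m)}_{i_m}$. For the real tensor $\mathcal{B}$, $\langle\mathcal{B},u^{(1)}\otimes\cdots\otimes u^{(m-1)}\rangle$ denotes the vector in $\mathbb{R}^{2n_m}$ with $j$-th component $\sum_{i_1,\dots,i_{m-1}}\mathcal{B}_{i_1\cdots i_{m-1}j}\,u^{(1)}_{i_1}\cdots u^{(m-1)}_{i_{m-1}}$. For $k\in\{1,\dots,m\}$, $\langle \mathcal{A},\otimes_{i=1,i\ne k}^m z^{(i)}\rangle$ denotes the vector in $\mathbb{C}^{n_k}$ whose $i_k$-th component is $\sum_{i_j,\, j\neq k} \overline{\mathcal{A}_{i_1\cdots i_m}}\, \prod_{j\ne k} z^{(j)}_{i_j}$. A real number $\lambda$ is a U-eigenvalue of $\mathcal{A}$, with U-eigenvector tuple $(x^{(1)},\dots,x^{(m)})$, if $x^{(i)}\in\mathbb{C}^{n_i}$, $\|x^{(i)}\|=1$ for all $i$, and $\langle \mathcal{A},\otimes_{i=1,i\ne k}^m x^{(i)}\rangle=\lambda\, \overline{x^{(k)}}$ for every $k=1,\dots,m$ (entrywise complex conjugate on the right). All norms on vectors are Euclidean. *)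

theory Defs
  imports "HOL-Analysis.Analysis"
begin

text \<open>An order-m tensor with mode sizes n 0, ..., n (m-1) is a function on index
tuples; index tuples are extensional functions in PiE {..<m} (\<lambda>k. {..<n k}).
A vector in C^(n_i) is a function nat => complex, only entries j < n_i matter.
Modes are numbered 0..m-1 (the paper's 1..m).\<close>

definition idx_set :: "nat \<Rightarrow> (nat \<Rightarrow> nat) \<Rightarrow> (nat \<Rightarrow> nat) set" where
  "idx_set m n = PiE {..<m} (\<lambda>k. {..<n k})"

definition cinner :: "nat \<Rightarrow> (nat \<Rightarrow> nat) \<Rightarrow> ((nat \<Rightarrow> nat) \<Rightarrow> complex)
    \<Rightarrow> (nat \<Rightarrow> nat \<Rightarrow> complex) \<Rightarrow> complex" where
  "cinner m n A z = (\<Sum>\<iota>\<in>idx_set m n. cnj (A \<iota>) * (\<Prod>k<m. z k (\<iota> k)))"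

definition ccontr :: "nat \<Rightarrow> (nat \<Rightarrow> nat) \<Rightarrow> ((nat \<Rightarrow> nat) \<Rightarrow> complex)
    \<Rightarrow> nat \<Rightarrow> (nat \<Rightarrow> nat \<Rightarrow> complex) \<Rightarrow> nat \<Rightarrow> complex" where
  "ccontr m n A k z j = (\<Sum>\<iota>\<in>{\<iota>\<in>idx_set m n. \<iota> k = j}.
      cnj (A \<iota>) * (\<Prod>l\<in>{..<m} - {k}. z l (\<iota> l)))"

definition rinner :: "nat \<Rightarrow> (nat \<Rightarrow> nat) \<Rightarrow> ((nat \<Rightarrow> nat) \<Rightarrow> real)
    \<Rightarrow> (nat \<Rightarrow> nat \<Rightarrow> real) \<Rightarrow> real" where
  "rinner m n B u = (\<Sum>\<iota>\<in>idx_set m n. B \<iota> * (\<Prod>k<m. u k (\<iota> k)))"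

definition rcontr_last :: "nat \<Rightarrow> (nat \<Rightarrow> nat) \<Rightarrow> ((nat \<Rightarrow> nat) \<Rightarrow> real)
    \<Rightarrow> (nat \<Rightarrow> nat \<Rightarrow> real) \<Rightarrow> nat \<Rightarrow> real" where
  "rcontr_last m n B u j = (\<Sum>\<iota>\<in>{\<iota>\<in>idx_set m n. \<iota> (m - 1) = j}.
      B \<iota> * (\<Prod>l<m - 1. u l (\<iota> l)))"

definition cvnorm :: "nat \<Rightarrow> (nat \<Rightarrow> complex) \<Rightarrow> real" where
  "cvnorm d v = sqrt (\<Sum>j<d. (cmod (v j))\<^sup>2)"

definition rvnorm :: "nat \<Rightarrow> (nat \<Rightarrow> real) \<Rightarrow> real" where
  "rvnorm d v = sqrt (\<Sum>j<d. (v j)\<^sup>2)"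

text \<open>u = (x, y) in R^(2d), entries 0..d-1 are x, entries d..2d-1 are y; gives x + i y.\<close>
definition to_cvec :: "nat \<Rightarrow> (nat \<Rightarrow> real) \<Rightarrow> nat \<Rightarrow> complex" where
  "to_cvec d u = (\<lambda>j. Complex (u j) (u (d + j)))"

definition U_eigenpair :: "nat \<Rightarrow> (nat \<Rightarrow> nat) \<Rightarrow> ((nat \<Rightarrow> nat) \<Rightarrow> complex)
    \<Rightarrow> real \<Rightarrow> (nat \<Rightarrow> nat \<Rightarrow> complex) \<Rightarrow> bool" where
  "U_eigenpair m n A lam x \<longleftrightarrow>
     (\<forall>i<m. cvnorm (n i) (x i) = 1) \<and>
     (\<forall>k<m. \<forall>j<n k. ccontr m n A k x j = complex_of_real lam * cnj (x k j))"

definition U_eigenvalue :: "nat \<Rightarrow> (nat \<Rightarrow> nat) \<Rightarrow> ((nat \<Rightarrow> nat) \<Rightarrow> complex)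
    \<Rightarrow> real \<Rightarrow> bool" where
  "U_eigenvalue m n A lam \<longleftrightarrow> (\<exists>x. U_eigenpair m n A lam x)"

end

theory Submission
  imports Defs
begin

lemma cs_rv: "(\<Sum>j<d. a j * b j) \<le> rvnorm d a * rvnorm d b"
proof -
  have "(\<Sum>j<d. a j * b j) \<le> sqrt ((\<Sum>j<d. a j * b j)\<^sup>2)" by simp
  also have "\<dots> \<le> sqrt ((\<Sum>j<d. (a j)\<^sup>2) * (\<Sum>j<d. (b j)\<^sup>2))"
    by (rule real_sqrt_le_mono) (rule Cauchy_Schwarz_ineq_sum)
  also have "\<dots> = rvnorm d a * rvnorm d b" by (simp add: rvnorm_def real_sqrt_mult)
  finally show ?thesis .
qed

lemma contr_split:
  fixes T :: "(nat \<Rightarrow> nat) \<Rightarrow> 'a::comm_ring_1"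
  assumes k: "k < m" and fin: "\<And>i. finite (S i)"
  shows "(\<Sum>\<iota>\<in>PiE {..<m} S. T \<iota> * (\<Prod>l<m. u l (\<iota> l)))
     = (\<Sum>j\<in>S k. (\<Sum>\<iota>\<in>{\<iota>\<in>PiE {..<m} S. \<iota> k = j}. T \<iota> * (\<Prod>l\<in>{..<m}-{k}. u l (\<iota> l))) * u k j)"
proof -
  have fP: "finite (PiE {..<m} S)" by (simp add: fin finite_PiE)
  have img: "(\<lambda>\<iota>. \<iota> k) ` PiE {..<m} S \<subseteq> S k" using k by (auto simp: PiE_iff)
  have pr: "(\<Prod>l<m. u l (\<iota> l)) = (\<Prod>l\<in>{..<m}-{k}. u l (\<iota> l)) * u k (\<iota> k)" for \<iota>
    using k by (simp add: prod.remove[of "{..<m}" k] mult.commute)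
  have "(\<Sum>\<iota>\<in>PiE {..<m} S. T \<iota> * (\<Prod>l<m. u l (\<iota> l)))
     = (\<Sum>j\<in>S k. (\<Sum>\<iota>\<in>{\<iota>\<in>PiE {..<m} S. \<iota> k = j}. T \<iota> * (\<Prod>l<m. u l (\<iota> l))))"
    by (rule sum.group[OF fP fin img, symmetric])
  also have "\<dots> = (\<Sum>j\<in>S k. (\<Sum>\<iota>\<in>{\<iota>\<in>PiE {..<m} S. \<iota> k = j}. T \<iota> * (\<Prod>l\<in>{..<m}-{k}. u l (\<iota> l))) * u k j)"
    unfolding sum_distrib_right
    by (intro sum.cong refl) (simp add: pr mult.assoc)
  finally show ?thesis .
qed

lemma norm_to_cvec: "cvnorm d (to_cvec d u) = rvnorm (2*d) u"
proof -
  have "(\<Sum>j<2*d. (u j)\<^sup>2) = (\<Sum>j<d. (u j)\<^sup>2) + (\<Sum>j\<in>{d..<d+d}. (u j)\<^sup>2)"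
    by (simp add: mult_2 lessThan_atLeast0 sum.atLeastLessThan_concat)
  also have "(\<Sum>j\<in>{d..<d+d}. (u j)\<^sup>2) = (\<Sum>j<d. (u (d+j))\<^sup>2)"
    using sum.shift_bounds_nat_ivl[of "\<lambda>j. (u j)\<^sup>2" 0 d d]
    by (simp add: lessThan_atLeast0 add.commute)
  finally show ?thesis
    by (simp add: cvnorm_def rvnorm_def to_cvec_def complex_norm sum.distrib)
qed

definition realify :: "(nat \<Rightarrow> nat) \<Rightarrow> (nat \<Rightarrow> nat \<Rightarrow> complex) \<Rightarrow> nat \<Rightarrow> nat \<Rightarrow> real" where
  "realify n z l j = (if j < n l then Re (z l j) else Im (z l (j - n l)))"

lemma to_cvec_realify: "j < n l \<Longrightarrow> to_cvec (n l) (realify n z l) j = z l j"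
  by (simp add: to_cvec_def realify_def complex_eq_iff)

lemma norm_realify: "rvnorm (2 * n l) (realify n z l) = cvnorm (n l) (z l)"
  by (simp add: norm_to_cvec[symmetric] cvnorm_def to_cvec_realify)

lemma cinner_realify: "cinner m n A (\<lambda>i. to_cvec (n i) (realify n z i)) = cinner m n A z"
  unfolding cinner_def idx_set_def
  by (intro sum.cong refl arg_cong2[where f="(*)"] prod.cong) (auto simp: to_cvec_realify PiE_iff)

definition rpart :: "nat \<Rightarrow> (nat \<Rightarrow> nat) \<Rightarrow> ((nat \<Rightarrow> nat) \<Rightarrow> real) \<Rightarrow> nat
   \<Rightarrow> (nat \<Rightarrow> nat \<Rightarrow> real) \<Rightarrow> nat \<Rightarrow> real" where
  "rpart m N B k u j = (\<Sum>\<iota>\<in>{\<iota>\<in>idx_set m N. \<iota> k = j}. B \<iota> * (\<Prod>l\<in>{..<m}-{k}. u l (\<iota> l)))"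

lemma rinner_split: "k < m \<Longrightarrow> rinner m N B u = (\<Sum>j<N k. rpart m N B k u j * u k j)"
  unfolding rinner_def rpart_def idx_set_def
  by (rule contr_split[where S="\<lambda>k. {..<N k}"]) auto

lemma rpart_upd: "rpart m N B k (u(k:=v)) = rpart m N B k u"
  unfolding rpart_def by (intro ext sum.cong refl arg_cong2[where f="(*)"] prod.cong) auto

lemma rcontr_last_eq: "1 \<le> m \<Longrightarrow> rcontr_last m N B u = rpart m N B (m-1) u"
proof -
  assume "1 \<le> m"
  then have "{..<m}-{m-1} = {..<m-1}" by auto
  then show ?thesis unfolding rcontr_last_def rpart_def by (simp add: fun_eq_iff)
qed

lemma cinner_split: "k < m \<Longrightarrow> cinner m n A z = (\<Sum>j<n k. ccontr m n A k z j * z k j)"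
  unfolding cinner_def ccontr_def idx_set_def
  by (rule contr_split[where S="\<lambda>k. {..<n k}"]) auto

lemma ccontr_upd: "ccontr m n A k (z(k:=w)) = ccontr m n A k z"
  unfolding ccontr_def by (intro ext sum.cong refl arg_cong2[where f="(*)"] prod.cong) auto

lemma cs_eq:
  fixes g w :: "nat \<Rightarrow> real"
  assumes lp: "lam > 0" and wn: "rvnorm d w = 1" and gw: "(\<Sum>j<d. g j * w j) = lam"
    and bd: "\<And>v. rvnorm d v = 1 \<Longrightarrow> (\<Sum>j<d. g j * v j) \<le> lam"
  shows "\<forall>j<d. g j = lam * w j"
proof -
  define s where "s = (\<Sum>j<d. (g j)\<^sup>2)"
  have s0: "s \<ge> 0" unfolding s_def by (simp add: sum_nonneg)
  have w2: "(\<Sum>j<d. (w j)\<^sup>2) = 1" using wn unfolding rvnorm_def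
    by (metis real_sqrt_eq_1_iff)
  have sle: "s \<le> lam\<^sup>2"
  proof (cases "s = 0")
    case True then show ?thesis by simp
  next
    case False
    then have sp: "s > 0" using s0 by simp
    define v where "v = (\<lambda>j. g j / sqrt s)"
    have "(\<Sum>j<d. (v j)\<^sup>2) = s / s" unfolding v_def s_def
      by (simp add: power_divide sum_divide_distrib[symmetric] s_def[symmetric] s0)
    then have "rvnorm d v = 1" using sp by (simp add: rvnorm_def)
    then have "(\<Sum>j<d. g j * v j) \<le> lam" by (rule bd)
    moreover have "(\<Sum>j<d. g j * v j) = s / sqrt s" unfolding v_def s_def
      by (simp add: sum_divide_distrib[symmetric] power2_eq_square)
    moreover have "s / sqrt s = sqrt s" using sp by (metis real_div_sqrt less_imp_le)
    ultimately have "sqrt s \<le> lam" by simp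
    then show ?thesis using s0 lp by (metis real_sqrt_le_iff real_sqrt_pow2 sqrt_le_D)
  qed
  have "(\<Sum>j<d. (g j - lam * w j)\<^sup>2) = s - 2 * lam * (\<Sum>j<d. g j * w j) + lam\<^sup>2 * (\<Sum>j<d. (w j)\<^sup>2)"
    unfolding s_def by (simp add: power2_diff sum.distrib sum_subtractf sum_distrib_left
        power_mult_distrib algebra_simps)
  also have "\<dots> \<le> 0" using sle gw w2 by (simp add: power2_eq_square)
  finally have "(\<Sum>j<d. (g j - lam * w j)\<^sup>2) = 0"
    by (meson order_antisym sum_nonneg zero_le_power2)
  then have "\<forall>j\<in>{..<d}. (g j - lam * w j)\<^sup>2 = 0"
    by (subst sum_nonneg_eq_0_iff[symmetric]) auto
  then show ?thesis by auto
qed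

lemma basis_pos:
  assumes i0: "\<iota>0 \<in> idx_set m n" and nz: "A \<iota>0 \<noteq> 0" and m0: "0 < m"
  shows "\<exists>z. (\<forall>l<m. cvnorm (n l) (z l) = 1) \<and> Re (cinner m n A z) > 0"
proof -
  define c where "c = A \<iota>0 / complex_of_real (cmod (A \<iota>0))"
  have cn: "cmod c = 1" using nz by (simp add: c_def norm_divide)
  define z where "z = (\<lambda>l j. if j = \<iota>0 l then (if l = 0 then c else 1) else (0::complex))"
  have lt: "l < m \<Longrightarrow> \<iota>0 l < n l" for l using i0 by (auto simp: idx_set_def PiE_iff)
  have norms: "\<forall>l<m. cvnorm (n l) (z l) = 1"
  proof (intro allI impI)
    fix l assume l: "l < m"
    have "(\<Sum>j<n l. (cmod (z l j))\<^sup>2) = (\<Sum>j<n l. if j = \<iota>0 l then 1 else 0)"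
      by (intro sum.cong refl) (auto simp: z_def cn)
    also have "\<dots> = 1" using lt[OF l] by simp
    finally show "cvnorm (n l) (z l) = 1" by (simp add: cvnorm_def)
  qed
  have fin: "finite (idx_set m n)" by (simp add: idx_set_def finite_PiE)
  have zero: "\<iota> \<in> idx_set m n - {\<iota>0} \<Longrightarrow> cnj (A \<iota>) * (\<Prod>l<m. z l (\<iota> l)) = 0" for \<iota>
  proof -
    assume "\<iota> \<in> idx_set m n - {\<iota>0}"
    then have "\<iota> \<in> PiE {..<m} (\<lambda>k. {..<n k})" "\<iota> \<noteq> \<iota>0" "\<iota>0 \<in> PiE {..<m} (\<lambda>k. {..<n k})"
      using i0 by (auto simp: idx_set_def)
    then obtain l where "l < m" "\<iota> l \<noteq> \<iota>0 l"
      by (metis PiE_ext lessThan_iff)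
    then have "(\<Prod>l<m. z l (\<iota> l)) = 0"
      by (intro prod_zero) (auto simp: z_def intro!: bexI[of _ l])
    then show ?thesis by simp
  qed
  have "cinner m n A z = cnj (A \<iota>0) * (\<Prod>l<m. z l (\<iota>0 l))"
  proof -
    have "(\<Sum>\<iota>\<in>idx_set m n - {\<iota>0}. cnj (A \<iota>) * (\<Prod>l<m. z l (\<iota> l))) = 0"
      using zero by (rule sum.neutral[rule_format])
    then show ?thesis unfolding cinner_def using sum.remove[OF fin i0, of "\<lambda>\<iota>. cnj (A \<iota>) * (\<Prod>l<m. z l (\<iota> l))"]
      by (metis add.right_neutral)
  qed
  also have "(\<Prod>l<m. z l (\<iota>0 l)) = (\<Prod>l<m. if l = 0 then c else 1)"
    by (intro prod.cong) (auto simp: z_def)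
  also have "\<dots> = c" using m0 by (simp add: prod.If_cases)
  finally have "cinner m n A z = cnj (A \<iota>0) * c" .
  also have "\<dots> = complex_of_real (cmod (A \<iota>0))"
  proof -
    have "cnj (A \<iota>0) * c = (A \<iota>0 * cnj (A \<iota>0)) / complex_of_real (cmod (A \<iota>0))"
      by (simp add: c_def mult.commute)
    also have "\<dots> = complex_of_real (cmod (A \<iota>0))^2 / complex_of_real (cmod (A \<iota>0))"
      by (simp only: complex_norm_square[symmetric] of_real_power)
    also have "\<dots> = complex_of_real (cmod (A \<iota>0))" using nz by (simp add: power2_eq_square)
    finally show ?thesis .
  qed
  finally have "Re (cinner m n A z) = cmod (A \<iota>0)" by simp
  then show ?thesis using norms nz by auto
qed

lemma sum_ind: "i < (d::nat) \<Longrightarrow> (\<Sum>j<d. f j * (if j = i then c else 0)) = f i * (c::'a::comm_ring_1)"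
proof -
  assume "i < d"
  have "(\<Sum>j<d. f j * (if j = i then c else 0)) = (\<Sum>j<d. if j = i then f i * c else 0)"
    by (intro sum.cong) auto
  also have "\<dots> = f i * c" using \<open>i < d\<close> by (subst sum.delta) auto
  finally show ?thesis .
qed

theorem theorem3p2:
  fixes m :: nat and n :: "nat \<Rightarrow> nat"
    and A :: "(nat \<Rightarrow> nat) \<Rightarrow> complex" and B :: "(nat \<Rightarrow> nat) \<Rightarrow> real"
    and uhat :: "nat \<Rightarrow> nat \<Rightarrow> real" and lam :: real
  assumes m2: "m \<ge> 2"
    and A_nz: "\<exists>\<iota>\<in>idx_set m n. A \<iota> \<noteq> 0"
    and B_def: "\<forall>u. rinner m (\<lambda>i. 2 * n i) B u
                    = Re (cinner m n A (\<lambda>i. to_cvec (n i) (u i)))"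
    and feas: "\<forall>i<m - 1. rvnorm (2 * n i) (uhat i) = 1"
    and maxim: "\<forall>u. (\<forall>i<m - 1. rvnorm (2 * n i) (u i) = 1) \<longrightarrow>
         rvnorm (2 * n (m - 1)) (rcontr_last m (\<lambda>i. 2 * n i) B u)
           \<le> rvnorm (2 * n (m - 1)) (rcontr_last m (\<lambda>i. 2 * n i) B uhat)"
    and lam_def: "lam = rvnorm (2 * n (m - 1)) (rcontr_last m (\<lambda>i. 2 * n i) B uhat)"
  shows "let um = (\<lambda>j. rcontr_last m (\<lambda>i. 2 * n i) B uhat j / lam);
             zhat = (\<lambda>i. to_cvec (n i) (if i = m - 1 then um else uhat i))
         in U_eigenvalue m n A lam \<and> (\<forall>\<mu>. U_eigenvalue m n A \<mu> \<longrightarrow> \<mu> \<le> lam)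
            \<and> U_eigenpair m n A lam zhat"
proof -
  have m1: "1 \<le> m" and mlt: "m - 1 < m" using m2 by auto
  define F where "F = rinner m (\<lambda>i. 2 * n i) B"
  have bound: "F u \<le> lam" if un: "\<forall>i<m. rvnorm (2 * n i) (u i) = 1" for u
  proof -
    have "F u = (\<Sum>j<2 * n (m-1). rcontr_last m (\<lambda>i. 2 * n i) B u j * u (m-1) j)"
      unfolding F_def using rinner_split[OF mlt] rcontr_last_eq[OF m1] by simp
    also have "\<dots> \<le> rvnorm (2 * n (m-1)) (rcontr_last m (\<lambda>i. 2 * n i) B u) * rvnorm (2 * n (m-1)) (u (m-1))"
      by (rule cs_rv)
    also have "\<dots> \<le> lam" using un mlt maxim lam_def by simp
    finally show ?thesis .
  qed
  have cbound: "Re (cinner m n A z) \<le> lam" if zn: "\<forall>l<m. cvnorm (n l) (z l) = 1" for z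
  proof -
    have "Re (cinner m n A z) = F (realify n z)"
      unfolding F_def using B_def cinner_realify by simp
    also have "\<dots> \<le> lam" using zn by (intro bound) (simp add: norm_realify)
    finally show ?thesis .
  qed
  have lampos: "lam > 0"
  proof -
    obtain \<iota>0 where i1: "\<iota>0 \<in> idx_set m n" and i2: "A \<iota>0 \<noteq> 0" using A_nz by blast
    have "0 < m" using m1 by simp
    from basis_pos[where A=A and m=m and n=n, OF i1 i2 this] obtain z where "\<forall>l<m. cvnorm (n l) (z l) = 1" "Re (cinner m n A z) > 0"
      by auto
    with cbound show ?thesis by force
  qed
  define g where "g = rcontr_last m (\<lambda>i. 2 * n i) B uhat"
  define um where "um = (\<lambda>j. g j / lam)"
  define ustar where "ustar = uhat(m-1 := um)"
  have lam2: "(\<Sum>j<2 * n (m-1). (g j)\<^sup>2) = lam\<^sup>2"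
    using lam_def unfolding g_def rvnorm_def by (simp add: sum_nonneg)
  have um_norm: "rvnorm (2 * n (m-1)) um = 1"
  proof -
    have "(\<Sum>j<2 * n (m-1). (um j)\<^sup>2) = lam\<^sup>2 / lam\<^sup>2"
      unfolding um_def power_divide sum_divide_distrib[symmetric] lam2 ..
    then show ?thesis using lampos by (simp add: rvnorm_def)
  qed
  have ustar_norm: "\<forall>l<m. rvnorm (2 * n l) (ustar l) = 1"
    using feas um_norm unfolding ustar_def by (auto simp: less_Suc_eq)
  have Fstar: "F ustar = lam"
  proof -
    have "F ustar = (\<Sum>j<2 * n (m-1). rpart m (\<lambda>i. 2 * n i) B (m-1) ustar j * ustar (m-1) j)"
      unfolding F_def using rinner_split[OF mlt] by simp
    also have "\<dots> = (\<Sum>j<2 * n (m-1). g j * (g j / lam))"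
      unfolding ustar_def rpart_upd g_def rcontr_last_eq[OF m1] um_def by simp
    also have "\<dots> = lam\<^sup>2 / lam"
      by (simp only: times_divide_eq_right power2_eq_square[symmetric] sum_divide_distrib[symmetric] lam2)
    also have "\<dots> = lam" using lampos by (simp add: power2_eq_square)
    finally show ?thesis .
  qed
  have Fupd: "F (ustar(k:=v)) = (\<Sum>j<2 * n k. rpart m (\<lambda>i. 2 * n i) B k ustar j * v j)"
    if k: "k < m" for k v
    unfolding F_def using rinner_split[OF k, of _ B "ustar(k:=v)"] by (simp add: rpart_upd)
  have stat: "\<forall>j<2 * n k. rpart m (\<lambda>i. 2 * n i) B k ustar j = lam * ustar k j" if k: "k < m" for k
  proof (rule cs_eq[OF lampos])
    show "rvnorm (2 * n k) (ustar k) = 1" using ustar_norm k by simp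
    show "(\<Sum>j<2 * n k. rpart m (\<lambda>i. 2 * n i) B k ustar j * ustar k j) = lam"
      using Fupd[OF k, of "ustar k"] Fstar by simp
    fix v assume "rvnorm (2 * n k) v = 1"
    then have "\<forall>l<m. rvnorm (2 * n l) ((ustar(k:=v)) l) = 1" using ustar_norm by auto
    then have "F (ustar(k:=v)) \<le> lam" by (rule bound)
    then show "(\<Sum>j<2 * n k. rpart m (\<lambda>i. 2 * n i) B k ustar j * v j) \<le> lam"
      using Fupd[OF k] by simp
  qed
  define zhat where "zhat = (\<lambda>i. to_cvec (n i) (ustar i))"
  have Fc: "F (ustar(k:=v)) = Re (\<Sum>j<n k. ccontr m n A k zhat j * to_cvec (n k) v j)"
    if k: "k < m" for k v
  proof -
    have e: "(\<lambda>i. to_cvec (n i) ((ustar(k:=v)) i)) = zhat(k := to_cvec (n k) v)"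
      by (auto simp: zhat_def)
    have "F (ustar(k:=v)) = Re (cinner m n A (zhat(k := to_cvec (n k) v)))"
      unfolding F_def using B_def e by metis
    also have "cinner m n A (zhat(k := to_cvec (n k) v)) = (\<Sum>j<n k. ccontr m n A k zhat j * to_cvec (n k) v j)"
      using cinner_split[OF k, of n A "zhat(k := to_cvec (n k) v)"] by (simp add: ccontr_upd)
    finally show ?thesis .
  qed
  have eig: "ccontr m n A k zhat j = complex_of_real lam * cnj (zhat k j)"
    if k: "k < m" and j: "j < n k" for k j
  proof -
    define c where "c = ccontr m n A k zhat j"
    have e1: "to_cvec (n k) (\<lambda>i. if i = j then 1 else 0) i = (if i = j then 1 else 0)" if "i < n k" for i
      using j by (simp add: to_cvec_def complex_eq_iff)
    have e2: "to_cvec (n k) (\<lambda>i. if i = n k + j then 1 else 0) i = (if i = j then \<i> else 0)" if "i < n k" for i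
      using that by (simp add: to_cvec_def complex_eq_iff)
    have "Re c = lam * ustar k j"
    proof -
      have "F (ustar(k := (\<lambda>i. if i = j then 1 else 0))) = rpart m (\<lambda>i. 2 * n i) B k ustar j"
        using Fupd[OF k] j by (simp add: sum_ind)
      moreover have "F (ustar(k := (\<lambda>i. if i = j then 1 else 0))) = Re c"
      proof -
        have "(\<Sum>i<n k. ccontr m n A k zhat i * to_cvec (n k) (\<lambda>i. if i = j then 1 else 0) i)
            = (\<Sum>i<n k. ccontr m n A k zhat i * (if i = j then 1 else 0))"
          by (intro sum.cong refl) (simp add: e1)
        also have "\<dots> = c" using j by (simp only: sum_ind c_def mult_1_right)
        finally show ?thesis using Fc[OF k] by (simp only:)
      qed
      ultimately show ?thesis using stat[OF k] j by simp
    qed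
    moreover have "- Im c = lam * ustar k (n k + j)"
    proof -
      have "F (ustar(k := (\<lambda>i. if i = n k + j then 1 else 0))) = rpart m (\<lambda>i. 2 * n i) B k ustar (n k + j)"
        using Fupd[OF k] j by (simp add: sum_ind)
      moreover have "F (ustar(k := (\<lambda>i. if i = n k + j then 1 else 0))) = - Im c"
      proof -
        have "(\<Sum>i<n k. ccontr m n A k zhat i * to_cvec (n k) (\<lambda>i. if i = n k + j then 1 else 0) i)
            = (\<Sum>i<n k. ccontr m n A k zhat i * (if i = j then \<i> else 0))"
          by (intro sum.cong refl) (simp add: e2)
        also have "\<dots> = c * \<i>" using j by (simp only: sum_ind c_def)
        finally show ?thesis using Fc[OF k] by (simp only:, simp)
      qed
      ultimately show ?thesis using stat[OF k] j by simp
    qed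
    ultimately show ?thesis unfolding c_def[symmetric]
      by (simp add: zhat_def to_cvec_def complex_eq_iff)
  qed
  have pair: "U_eigenpair m n A lam zhat"
    unfolding U_eigenpair_def using eig ustar_norm by (simp add: zhat_def norm_to_cvec)
  have maxev: "\<mu> \<le> lam" if ev: "U_eigenvalue m n A \<mu>" for \<mu>
  proof -
    obtain x where x: "U_eigenpair m n A \<mu> x" using ev U_eigenvalue_def by blast
    have m0: "0 < m" using m1 by simp
    have "cinner m n A x = (\<Sum>j<n 0. ccontr m n A 0 x j * x 0 j)" by (rule cinner_split[OF m0])
    also have "\<dots> = (\<Sum>j<n 0. complex_of_real \<mu> * complex_of_real ((cmod (x 0 j))\<^sup>2))"
      using x m0 unfolding U_eigenpair_def
      by (intro sum.cong refl) (simp add: complex_norm_square[symmetric] mult.commute)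
    also have "\<dots> = complex_of_real (\<mu> * (\<Sum>j<n 0. (cmod (x 0 j))\<^sup>2))"
      by (simp add: sum_distrib_left)
    also have "(\<Sum>j<n 0. (cmod (x 0 j))\<^sup>2) = 1"
      using x m0 unfolding U_eigenpair_def cvnorm_def by (metis real_sqrt_eq_1_iff)
    finally have "Re (cinner m n A x) = \<mu>" by simp
    moreover have "Re (cinner m n A x) \<le> lam" using x cbound unfolding U_eigenpair_def by blast
    ultimately show ?thesis by simp
  qed
  have zh: "(\<lambda>i. to_cvec (n i) (if i = m - 1 then (\<lambda>j. rcontr_last m (\<lambda>i. 2 * n i) B uhat j / lam) else uhat i)) = zhat"
    by (auto simp: zhat_def ustar_def um_def g_def)
  show ?thesis unfolding Let_def zh using pair maxev U_eigenvalue_def by blast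
qed

end
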